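(* Let $\mathbb F=\mathbb R$ or $\mathbb C$, let $U_1,V_1,U_1',V_1'$ be finite-dimensional normed vector spaces over $\mathbb F$, let $\mathcal A_1,\mathcal B_1:U_1\to V_1$ and $\mathcal A_1',\mathcal B_1':U_1'\to V_1'$ be surjective linear maps, and let $\varphi_1:U_1\to U_1'$, $\psi_1:V_1\to V_1'$ be homeomorphisms with $\psi_1\mathcal A_1=\mathcal A_1'\varphi_1$ and $\psi_1\mathcal B_1=\mathcal B_1'\varphi_1$. Then for every $u\in U_1$ and $v\in V_1$, \[\varphi_1(u+\operatorname{Ker}\mathcal B_1)=\varphi_1(u)+\operatorname{Ker}\mathcal B_1',\qquad \psi_1\bigl(v+\mathcal A_1(\operatorname{Ker}\mathcal B_1)\bigr)=\psi_1(v)+\mathcal A_1'(\operatorname{Ker}\mathcal B_1').\] Consequently $\varphi_1$ and $\psi_1$ induce well-defined bijections $\varphi_2:U_1/\operatorname{Ker}\mathcal B_1\to U_1'/\operatorname{Ker}\mathcal B_1'$ and $\psi_2:V_1/\mathcal A_1(\operatorname{Ker}\mathcal B_1)\to V_1'/\mathcal A_1'(\operatorname{Ker}\mathcal B_1')$, which are homeomorphisms (for the quotient topologies) satisfying $\psi_2\mathcal A_2=\mathcal A_2'\varphi_2$ and $\psi_2\mathcal B_2=\mathcal B_2'\varphi_2$, where $\mathcal A_2,\mathcal B_2$ and $\mathcal A_2',\mathcal B_2'$ are the linear maps induced by $\mathcal A_1,\mathcal B_1$ and $\mathcal A_1',\mathcal B_1'$ on these quotient spaces.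
   Context: Homeomorphisms are with respect to the norm topologies; $\varphi_1,\psi_1$ need not be linear. The induced map $\mathcal A_2:U_1/\operatorname{Ker}\mathcal B_1\to V_1/\mathcal A_1(\operatorname{Ker}\mathcal B_1)$ sends $u+\operatorname{Ker}\mathcal B_1$ to $\mathcal A_1(u)+\mathcal A_1(\operatorname{Ker}\mathcal B_1)$, and $\mathcal B_2$ sends $u+\operatorname{Ker}\mathcal B_1$ to $\mathcal B_1(u)+\mathcal A_1(\operatorname{Ker}\mathcal B_1)$; similarly for the primed maps. *)

theory Defs
  imports "HOL-Analysis.Analysis"
begin

definition fin_dim_space :: "'a::real_vector itself \<Rightarrow> bool" where
  "fin_dim_space _ \<longleftrightarrow> (\<exists>B::'a set. finite B \<and> span B = UNIV)"

definition ker :: "('a \<Rightarrow> 'b::zero) \<Rightarrow> 'a set" where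
  "ker f = {x. f x = 0}"

definition coset :: "'a::plus \<Rightarrow> 'a set \<Rightarrow> 'a set" where
  "coset u K = (\<lambda>k. u + k) ` K"

definition quot_space :: "'a::plus set \<Rightarrow> 'a set set" where
  "quot_space K = range (\<lambda>u. coset u K)"

definition quot_top :: "'a::{plus,topological_space} set \<Rightarrow> 'a set topology" where
  "quot_top K = topology (\<lambda>S. S \<subseteq> quot_space K \<and> open {u. coset u K \<in> S})"

definition induced :: "('a \<Rightarrow> 'b::plus) \<Rightarrow> 'a set \<Rightarrow> 'b set \<Rightarrow> 'a set \<Rightarrow> 'b set" where
  "induced f K L c = coset (f (SOME u. u \<in> c)) L"

end

theory Submission
  imports Defs
begin

lemma coset_mem: "subspace K \<Longrightarrow> (w \<in> coset u K) \<longleftrightarrow> w - u \<in> K"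
  unfolding coset_def by (auto simp: subspace_diff) (metis add_diff_cancel_left' diff_add_cancel image_eqI add.commute)

lemma coset_self: "subspace K \<Longrightarrow> u \<in> coset u K"
  by (simp add: coset_mem subspace_0)

lemma coset_eq: "subspace K \<Longrightarrow> coset u K = coset w K \<longleftrightarrow> w - u \<in> K"
proof
  assume K: "subspace K" and "coset u K = coset w K"
  then have "w \<in> coset u K" using coset_self by metis
  then show "w - u \<in> K" using K coset_mem by blast
next
  assume K: "subspace K" and h: "w - u \<in> K"
  show "coset u K = coset w K"
  proof (rule set_eqI)
    fix x
    have "x - u = (x - w) + (w - u)" "x - w = (x - u) - (w - u)" by simp_all
    then show "x \<in> coset u K \<longleftrightarrow> x \<in> coset w K"
      using K h by (metis coset_mem subspace_add subspace_diff)
  qed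
qed

lemma induced_coset:
  assumes K: "subspace K" and L: "subspace L"
    and h: "\<And>w. w - u \<in> K \<Longrightarrow> f w - f u \<in> L"
  shows "induced f K L (coset u K) = coset (f u) L"
proof -
  have "(SOME x. x \<in> coset u K) \<in> coset u K" using coset_self[OF K] by (rule someI)
  then have "(SOME x. x \<in> coset u K) - u \<in> K" using coset_mem[OF K] by blast
  then have "f (SOME x. x \<in> coset u K) - f u \<in> L" by (rule h)
  then have "coset (f u) L = coset (f (SOME x. x \<in> coset u K)) L" using coset_eq[OF L] by blast
  then show ?thesis unfolding induced_def by simp
qed

lemma openin_quot_top:
  "openin (quot_top K) S \<longleftrightarrow> S \<subseteq> quot_space K \<and> open {u. coset u K \<in> S}"
proof -
  have "istopology (\<lambda>S. S \<subseteq> quot_space K \<and> open {u. coset u K \<in> S})"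
    unfolding istopology_def
  proof (rule conjI; intro allI impI)
    fix S T assume "S \<subseteq> quot_space K \<and> open {u. coset u K \<in> S}" "T \<subseteq> quot_space K \<and> open {u. coset u K \<in> T}"
    moreover have "{u. coset u K \<in> S \<inter> T} = {u. coset u K \<in> S} \<inter> {u. coset u K \<in> T}" by auto
    ultimately show "S \<inter> T \<subseteq> quot_space K \<and> open {u. coset u K \<in> S \<inter> T}" by auto
  next
    fix \<K> assume h: "\<forall>S\<in>\<K>. S \<subseteq> quot_space K \<and> open {u. coset u K \<in> S}"
    have "{u. coset u K \<in> \<Union>\<K>} = (\<Union>S\<in>\<K>. {u. coset u K \<in> S})" by auto
    then show "\<Union>\<K> \<subseteq> quot_space K \<and> open {u. coset u K \<in> \<Union>\<K>}" using h by auto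
  qed
  then show ?thesis unfolding quot_top_def by simp
qed

lemma topspace_quot_top: "topspace (quot_top K) = quot_space K"
proof -
  have "openin (quot_top K) (quot_space K)"
    unfolding openin_quot_top quot_space_def by auto
  then have "quot_space K \<subseteq> topspace (quot_top K)" by (rule openin_subset)
  moreover have "topspace (quot_top K) \<subseteq> quot_space K"
    using openin_topspace[of "quot_top K"] unfolding openin_quot_top by blast
  ultimately show ?thesis by blast
qed

lemma cont_quot:
  assumes K: "subspace K" and L: "subspace L" and c: "continuous_on UNIV f"
    and h: "\<And>u. induced f K L (coset u K) = coset (f u) L"
  shows "continuous_map (quot_top K) (quot_top L) (induced f K L)"
  unfolding continuous_map_def topspace_quot_top
proof (intro conjI allI impI)
  show "induced f K L \<in> quot_space K \<rightarrow> quot_space L"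
    unfolding quot_space_def using h by auto
next
  fix U assume "openin (quot_top L) U"
  then have U: "U \<subseteq> quot_space L" "open {u. coset u L \<in> U}" by (auto simp: openin_quot_top)
  have "{u. coset u K \<in> {x \<in> quot_space K. induced f K L x \<in> U}} = f -` {u. coset u L \<in> U}"
    by (simp add: h quot_space_def)
  moreover have "open (f -` {u. coset u L \<in> U})"
  proof -
    have "\<forall>B. open B \<longrightarrow> open (f -` B)"
      using continuous_on_open_vimage[OF open_UNIV, of f] c by simp
    then show ?thesis using U(2) by blast
  qed
  ultimately show "openin (quot_top K) {x \<in> quot_space K. induced f K L x \<in> U}"
    by (simp add: openin_quot_top)
qed

lemma generic:
  assumes hm: "homeomorphic_map euclidean euclidean f" and K: "subspace K" and L: "subspace L"
    and im: "\<And>u. f ` coset u K = coset (f u) L"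
  shows "bij_betw (induced f K L) (quot_space K) (quot_space L)
    \<and> homeomorphic_map (quot_top K) (quot_top L) (induced f K L)"
proof -
  obtain g where g: "homeomorphic_maps euclidean euclidean f g" using hm homeomorphic_map_maps by blast
  then have cf: "continuous_on UNIV f" and cg: "continuous_on UNIV g"
    and gf: "\<And>x. g (f x) = x" and fg: "\<And>y. f (g y) = y"
    by (auto simp: homeomorphic_maps_def)
  have img: "g ` coset y L = coset (g y) K" for y
  proof -
    have "f ` coset (g y) K = coset y L" using im[of "g y"] fg by simp
    then have "g ` f ` coset (g y) K = g ` coset y L" by simp
    then show ?thesis by (simp add: image_image gf)
  qed
  have hf: "induced f K L (coset u K) = coset (f u) L" for u
  proof (rule induced_coset[OF K L])
    fix w assume "w - u \<in> K"
    then have "coset w K = coset u K" using coset_eq[OF K] by (metis minus_diff_eq subspace_neg[OF K])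
    then have "coset (f u) L = coset (f w) L" using im by metis
    then show "f w - f u \<in> L" using coset_eq[OF L] by blast
  qed
  have hg: "induced g L K (coset y L) = coset (g y) K" for y
  proof (rule induced_coset[OF L K])
    fix w assume "w - y \<in> L"
    then have "coset w L = coset y L" using coset_eq[OF L] by (metis minus_diff_eq subspace_neg[OF L])
    then have "coset (g y) K = coset (g w) K" using img by metis
    then show "g w - g y \<in> K" using coset_eq[OF K] by blast
  qed
  have maps: "homeomorphic_maps (quot_top K) (quot_top L) (induced f K L) (induced g L K)"
    unfolding homeomorphic_maps_def topspace_quot_top
    using cont_quot[OF K L cf hf] cont_quot[OF L K cg hg] hf hg gf fg
    by (auto simp: quot_space_def)
  have "bij_betw (induced f K L) (quot_space K) (quot_space L)"
  proof (rule bij_betw_byWitness[where f'="induced g L K"])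
    show "\<forall>a\<in>quot_space K. induced g L K (induced f K L a) = a"
      using hf hg gf by (auto simp: quot_space_def)
    show "\<forall>a'\<in>quot_space L. induced f K L (induced g L K a') = a'"
      using hf hg fg by (auto simp: quot_space_def)
    show "induced f K L ` quot_space K \<subseteq> quot_space L" using hf by (auto simp: quot_space_def)
    show "induced g L K ` quot_space L \<subseteq> quot_space K" using hg by (auto simp: quot_space_def)
  qed
  then show ?thesis using maps homeomorphic_map_maps by blast
qed


theorem lemma5:
  fixes A1 B1 :: "'u::real_normed_vector \<Rightarrow> 'v::real_normed_vector"
    and A1' B1' :: "'u2::real_normed_vector \<Rightarrow> 'v2::real_normed_vector"
    and \<phi>1 :: "'u \<Rightarrow> 'u2" and \<psi>1 :: "'v \<Rightarrow> 'v2"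
  assumes "fin_dim_space TYPE('u)" "fin_dim_space TYPE('v)"
    and "fin_dim_space TYPE('u2)" "fin_dim_space TYPE('v2)"
    and "linear A1" "linear B1" "surj A1" "surj B1"
    and "linear A1'" "linear B1'" "surj A1'" "surj B1'"
    and "homeomorphic_map euclidean euclidean \<phi>1"
    and "homeomorphic_map euclidean euclidean \<psi>1"
    and "\<psi>1 \<circ> A1 = A1' \<circ> \<phi>1" and "\<psi>1 \<circ> B1 = B1' \<circ> \<phi>1"
  shows "(\<forall>u. \<phi>1 ` coset u (ker B1) = coset (\<phi>1 u) (ker B1'))
    \<and> (\<forall>v. \<psi>1 ` coset v (A1 ` ker B1) = coset (\<psi>1 v) (A1' ` ker B1'))
    \<and> (\<forall>u w. coset u (ker B1) = coset w (ker B1)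
          \<longrightarrow> coset (\<phi>1 u) (ker B1') = coset (\<phi>1 w) (ker B1'))
    \<and> (\<forall>v w. coset v (A1 ` ker B1) = coset w (A1 ` ker B1)
          \<longrightarrow> coset (\<psi>1 v) (A1' ` ker B1') = coset (\<psi>1 w) (A1' ` ker B1'))
    \<and> bij_betw (induced \<phi>1 (ker B1) (ker B1')) (quot_space (ker B1)) (quot_space (ker B1'))
    \<and> bij_betw (induced \<psi>1 (A1 ` ker B1) (A1' ` ker B1'))
        (quot_space (A1 ` ker B1)) (quot_space (A1' ` ker B1'))
    \<and> homeomorphic_map (quot_top (ker B1)) (quot_top (ker B1'))
        (induced \<phi>1 (ker B1) (ker B1'))
    \<and> homeomorphic_map (quot_top (A1 ` ker B1)) (quot_top (A1' ` ker B1'))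
        (induced \<psi>1 (A1 ` ker B1) (A1' ` ker B1'))
    \<and> (\<forall>c \<in> quot_space (ker B1).
          induced \<psi>1 (A1 ` ker B1) (A1' ` ker B1') (induced A1 (ker B1) (A1 ` ker B1) c)
          = induced A1' (ker B1') (A1' ` ker B1') (induced \<phi>1 (ker B1) (ker B1') c))
    \<and> (\<forall>c \<in> quot_space (ker B1).
          induced \<psi>1 (A1 ` ker B1) (A1' ` ker B1') (induced B1 (ker B1) (A1 ` ker B1) c)
          = induced B1' (ker B1') (A1' ` ker B1') (induced \<phi>1 (ker B1) (ker B1') c))"
proof -
  note a = assms
  obtain g where g: "homeomorphic_maps euclidean euclidean \<phi>1 g" using a(13) homeomorphic_map_maps by blast
  then have gf: "\<And>x. g (\<phi>1 x) = x" and fg: "\<And>y. \<phi>1 (g y) = y" by (auto simp: homeomorphic_maps_def)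
  have injpsi: "inj \<psi>1" using a(14) homeomorphic_imp_injective_map by fastforce
  have K: "subspace (ker B1)" unfolding ker_def using a(6) by (rule linear_subspace_kernel)
  have K': "subspace (ker B1')" unfolding ker_def using a(10) by (rule linear_subspace_kernel)
  have W: "subspace (A1 ` ker B1)" using a(5) K by (rule linear_subspace_image)
  have W': "subspace (A1' ` ker B1')" using a(9) K' by (rule linear_subspace_image)
  have cmK: "w \<in> coset u (ker B1) \<longleftrightarrow> B1 w = B1 u" for u w
    using coset_mem[OF K] a(6) by (simp add: ker_def linear_diff)
  have cmK': "w \<in> coset u (ker B1') \<longleftrightarrow> B1' w = B1' u" for u w
    using coset_mem[OF K'] a(10) by (simp add: ker_def linear_diff)
  have psiB: "\<psi>1 (B1 x) = B1' (\<phi>1 x)" for x using a(16) by (metis comp_apply)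
  have psiA: "\<psi>1 (A1 x) = A1' (\<phi>1 x)" for x using a(15) by (metis comp_apply)
  have P1: "\<phi>1 ` coset u (ker B1) = coset (\<phi>1 u) (ker B1')" for u
  proof (rule set_eqI)
    fix x
    show "x \<in> \<phi>1 ` coset u (ker B1) \<longleftrightarrow> x \<in> coset (\<phi>1 u) (ker B1')"
    proof
      assume "x \<in> \<phi>1 ` coset u (ker B1)"
      then obtain w where "x = \<phi>1 w" "B1 w = B1 u" using cmK by auto
      then show "x \<in> coset (\<phi>1 u) (ker B1')" using cmK' psiB by metis
    next
      assume "x \<in> coset (\<phi>1 u) (ker B1')"
      then have "B1' (\<phi>1 (g x)) = B1' (\<phi>1 u)" using cmK' fg by simp
      then have "\<psi>1 (B1 (g x)) = \<psi>1 (B1 u)" using psiB by simp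
      then have "B1 (g x) = B1 u" using injpsi by (simp add: inj_eq)
      then have "g x \<in> coset u (ker B1)" using cmK by simp
      then show "x \<in> \<phi>1 ` coset u (ker B1)" using fg by (metis image_eqI)
    qed
  qed
  have Aim: "A1 ` coset u (ker B1) = coset (A1 u) (A1 ` ker B1)" for u
    unfolding coset_def image_image using a(5) by (simp add: linear_add)
  have Aim': "A1' ` coset u (ker B1') = coset (A1' u) (A1' ` ker B1')" for u
    unfolding coset_def image_image using a(9) by (simp add: linear_add)
  have P2: "\<psi>1 ` coset v (A1 ` ker B1) = coset (\<psi>1 v) (A1' ` ker B1')" for v
  proof -
    obtain u where v: "v = A1 u" using a(7) by (metis surjD)
    have "\<psi>1 ` coset v (A1 ` ker B1) = \<psi>1 ` A1 ` coset u (ker B1)" using Aim v by simp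
    also have "\<dots> = A1' ` \<phi>1 ` coset u (ker B1)" by (simp add: image_image psiA)
    also have "\<dots> = coset (A1' (\<phi>1 u)) (A1' ` ker B1')" using P1 Aim' by simp
    finally show ?thesis using v psiA by simp
  qed
  note G1 = generic[OF a(13) K K' P1]
  note G2 = generic[OF a(14) W W' P2]
  have iK: "induced f (ker B1) L (coset u (ker B1)) = coset (f u) L"
    if L: "subspace L" and f: "\<And>w. B1 w = B1 u \<Longrightarrow> f w - f u \<in> L" for f :: "'u \<Rightarrow> 'x::real_vector" and L u
    using induced_coset[OF K L] f cmK coset_mem[OF K] by blast
  have iK': "induced f (ker B1') L (coset u (ker B1')) = coset (f u) L"
    if L: "subspace L" and f: "\<And>w. B1' w = B1' u \<Longrightarrow> f w - f u \<in> L" for f :: "'u2 \<Rightarrow> 'x::real_vector" and L u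
    using induced_coset[OF K' L] f cmK' coset_mem[OF K'] by blast
  have iphi: "induced \<phi>1 (ker B1) (ker B1') (coset u (ker B1)) = coset (\<phi>1 u) (ker B1')" for u
    by (rule iK[OF K']) (metis cmK' coset_mem[OF K'] psiB)
  have ipsi: "induced \<psi>1 (A1 ` ker B1) (A1' ` ker B1') (coset v (A1 ` ker B1)) = coset (\<psi>1 v) (A1' ` ker B1')" for v
  proof (rule induced_coset[OF W W'])
    fix w assume "w - v \<in> A1 ` ker B1"
    then have "coset w (A1 ` ker B1) = coset v (A1 ` ker B1)"
      using coset_eq[OF W] by (metis minus_diff_eq subspace_neg[OF W])
    then have "coset (\<psi>1 v) (A1' ` ker B1') = coset (\<psi>1 w) (A1' ` ker B1')" using P2 by metis
    then show "\<psi>1 w - \<psi>1 v \<in> A1' ` ker B1'" using coset_eq[OF W'] by blast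
  qed
  have iA: "induced A1 (ker B1) (A1 ` ker B1) (coset u (ker B1)) = coset (A1 u) (A1 ` ker B1)" for u
    by (rule iK[OF W]) (metis a(5) linear_diff cmK coset_mem[OF K] imageI)
  have iB: "induced B1 (ker B1) (A1 ` ker B1) (coset u (ker B1)) = coset (B1 u) (A1 ` ker B1)" for u
    by (rule iK[OF W]) (simp add: subspace_0[OF W])
  have iA': "induced A1' (ker B1') (A1' ` ker B1') (coset u (ker B1')) = coset (A1' u) (A1' ` ker B1')" for u
    by (rule iK'[OF W']) (metis a(9) linear_diff cmK' coset_mem[OF K'] imageI)
  have iB': "induced B1' (ker B1') (A1' ` ker B1') (coset u (ker B1')) = coset (B1' u) (A1' ` ker B1')" for u
    by (rule iK'[OF W']) (simp add: subspace_0[OF W'])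
  have C1: "\<forall>c \<in> quot_space (ker B1).
          induced \<psi>1 (A1 ` ker B1) (A1' ` ker B1') (induced A1 (ker B1) (A1 ` ker B1) c)
          = induced A1' (ker B1') (A1' ` ker B1') (induced \<phi>1 (ker B1) (ker B1') c)"
    unfolding quot_space_def using iA iphi ipsi iA' psiA by auto
  have C2: "\<forall>c \<in> quot_space (ker B1).
          induced \<psi>1 (A1 ` ker B1) (A1' ` ker B1') (induced B1 (ker B1) (A1 ` ker B1) c)
          = induced B1' (ker B1') (A1' ` ker B1') (induced \<phi>1 (ker B1) (ker B1') c)"
    unfolding quot_space_def using iB iphi ipsi iB' psiB by auto
  show ?thesis using P1 P2 G1 G2 C1 C2 by metis
qed

end
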